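(* Let $G$ be a map graph with a corresponding planar bipartite graph $B$, let $\mathcal{D}=(T,\beta_{\mathcal{D}})$ be a nice tree decomposition of $B$, and let $\mathcal{D}'$ be derived from $\mathcal{D}$ as described in the context. Let $t$ be a node of $T$ labelled join in $\mathcal{D}$, with children $t_1$ and $t_2$. Then $\mathsf{Original}(t)=\mathsf{Original}(t_1)=\mathsf{Original}(t_2)$, $\mathsf{Cliques}(t)=\mathsf{Cliques}(t_1)=\mathsf{Cliques}(t_2)$, $\mathsf{Fake}(t_1)\cap\mathsf{Fake}(t_2)=\emptyset$, and $\mathsf{Fake}(t)=\mathsf{Fake}(t_1)\cup\mathsf{Fake}(t_2)$.
   Context: All graphs are finite and simple. For a bipartite graph $B$ with bipartition $V(B)=W\uplus U$, the half-square of $B$ is the graph on $W$ in which two vertices are adjacent iff they are at distance exactly $2$ in $B$. A graph $G$ is a map graph iff it is the half-square of some planar bipartite graph $B$; such $B$ (with $W=V(G)$) is a corresponding planar bipartite graph, and $S(G)=U$ is the set of special vertices; for $s\in S(G)$, $N_B(s)$ is a clique of $G$ called a special clique. A tree decomposition $(T,\beta)$: rooted tree $T$, bags covering all vertices and edges, and for each vertex the nodes containing it induce a connected subtree. $\gamma_{\mathcal{D}}(t)$ is the union of bags of $t$ and its descendants. A nice tree decomposition has empty root bag and each node is a leaf (empty bag), introduce$(w)$, forget$(w)$ (one child, bag obtained by adding/removing $w$), or join (two children whose bags equal $\beta(t)$). The derived decomposition $\mathcal{D}'=(T,\beta_{\mathcal{D}'})$ has $\beta_{\mathcal{D}'}(t)=(\beta_{\mathcal{D}}(t)\cap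 V(G))\cup\bigcup_{s\in\beta_{\mathcal{D}}(t)\cap S(G)}(N_B(s)\cap\gamma_{\mathcal{D}}(t))$. Define $\mathsf{Original}(t)=\beta_{\mathcal{D}}(t)\cap\beta_{\mathcal{D}'}(t)$, $\mathsf{Fake}(t)=\beta_{\mathcal{D}'}(t)\setminus\beta_{\mathcal{D}}(t)$, and $\mathsf{Cliques}(t)=\{N_B(s): s\in S(G)\cap\beta_{\mathcal{D}}(t)\}$. *)

theory Defs
  imports "HOL-Analysis.Analysis"
begin

definition simple_graph :: "'v set \<Rightarrow> ('v \<Rightarrow> 'v \<Rightarrow> bool) \<Rightarrow> bool" where
  "simple_graph V E \<longleftrightarrow> finite V \<and> (\<forall>x y. E x y \<longrightarrow> x \<in> V \<and> y \<in> V)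
     \<and> (\<forall>x y. E x y \<longrightarrow> E y x) \<and> (\<forall>x. \<not> E x x)"

definition edges :: "('v \<Rightarrow> 'v \<Rightarrow> bool) \<Rightarrow> 'v set set" where
  "edges E = {{u, v} | u v. E u v}"

definition bipartite_graph :: "'v set \<Rightarrow> 'v set \<Rightarrow> ('v \<Rightarrow> 'v \<Rightarrow> bool) \<Rightarrow> bool" where
  "bipartite_graph W U E \<longleftrightarrow> W \<inter> U = {} \<and> simple_graph (W \<union> U) E
     \<and> (\<forall>x y. E x y \<longrightarrow> (x \<in> W \<and> y \<in> U) \<or> (x \<in> U \<and> y \<in> W))"

definition planar_graph :: "'v set \<Rightarrow> ('v \<Rightarrow> 'v \<Rightarrow> bool) \<Rightarrow> bool" where
  "planar_graph V E \<longleftrightarrow> simple_graph V E \<and>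
     (\<exists>(p :: 'v \<Rightarrow> complex) (a :: 'v set \<Rightarrow> real \<Rightarrow> complex).
        inj_on p V \<and>
        (\<forall>u v. E u v \<longrightarrow> arc (a {u, v}) \<and>
              {pathstart (a {u, v}), pathfinish (a {u, v})} = {p u, p v} \<and>
              path_image (a {u, v}) \<inter> p ` V \<subseteq> {p u, p v}) \<and>
        (\<forall>e \<in> edges E. \<forall>e' \<in> edges E. e \<noteq> e' \<longrightarrow>
              path_image (a e) \<inter> path_image (a e') \<subseteq> p ` (e \<inter> e')))"

definition half_square :: "'v set \<Rightarrow> ('v \<Rightarrow> 'v \<Rightarrow> bool) \<Rightarrow> 'v \<Rightarrow> 'v \<Rightarrow> bool" where
  "half_square W E u v \<longleftrightarrow> u \<in> W \<and> v \<in> W \<and> u \<noteq> v \<and> \<not> E u v \<and> (\<exists>s. E u s \<and> E s v)"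

text \<open>G = (VG, EG) is a map graph with corresponding planar bipartite graph B = (W \<union> U, E),
  W = V(G), U = S(G).\<close>
definition map_graph_with :: "'v set \<Rightarrow> ('v \<Rightarrow> 'v \<Rightarrow> bool) \<Rightarrow> 'v set \<Rightarrow> 'v set
    \<Rightarrow> ('v \<Rightarrow> 'v \<Rightarrow> bool) \<Rightarrow> bool" where
  "map_graph_with VG EG W U E \<longleftrightarrow> VG = W \<and> bipartite_graph W U E \<and>
     planar_graph (W \<union> U) E \<and> EG = half_square W E"

definition nbr :: "('v \<Rightarrow> 'v \<Rightarrow> bool) \<Rightarrow> 'v \<Rightarrow> 'v set" where
  "nbr E s = {x. E s x}"

definition rooted_tree :: "'n set \<Rightarrow> ('n \<times> 'n) set \<Rightarrow> 'n \<Rightarrow> bool" where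
  "rooted_tree N C r \<longleftrightarrow> finite N \<and> C \<subseteq> N \<times> N \<and> r \<in> N \<and> (\<forall>x. (x, r) \<notin> C)
     \<and> (\<forall>y \<in> N - {r}. \<exists>!x. (x, y) \<in> C) \<and> (\<forall>y \<in> N. (r, y) \<in> C\<^sup>*)"

definition children :: "('n \<times> 'n) set \<Rightarrow> 'n \<Rightarrow> 'n set" where
  "children C t = {c. (t, c) \<in> C}"

definition descendants :: "('n \<times> 'n) set \<Rightarrow> 'n \<Rightarrow> 'n set" where
  "descendants C t = {d. (t, d) \<in> C\<^sup>*}"

definition gamma :: "('n \<times> 'n) set \<Rightarrow> ('n \<Rightarrow> 'v set) \<Rightarrow> 'n \<Rightarrow> 'v set" where
  "gamma C \<beta> t = \<Union> (\<beta> ` descendants C t)"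

definition tree_connected :: "('n \<times> 'n) set \<Rightarrow> 'n set \<Rightarrow> bool" where
  "tree_connected C X \<longleftrightarrow> (\<forall>x \<in> X. \<forall>y \<in> X.
     (x, y) \<in> {(a, b). a \<in> X \<and> b \<in> X \<and> ((a, b) \<in> C \<or> (b, a) \<in> C)}\<^sup>*)"

definition tree_decomposition :: "'v set \<Rightarrow> ('v \<Rightarrow> 'v \<Rightarrow> bool) \<Rightarrow> 'n set
    \<Rightarrow> ('n \<times> 'n) set \<Rightarrow> 'n \<Rightarrow> ('n \<Rightarrow> 'v set) \<Rightarrow> bool" where
  "tree_decomposition V E N C r \<beta> \<longleftrightarrow> rooted_tree N C r
     \<and> (\<forall>t \<in> N. \<beta> t \<subseteq> V)
     \<and> (\<forall>v \<in> V. \<exists>t \<in> N. v \<in> \<beta> t)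
     \<and> (\<forall>u v. E u v \<longrightarrow> (\<exists>t \<in> N. u \<in> \<beta> t \<and> v \<in> \<beta> t))
     \<and> (\<forall>v \<in> V. tree_connected C {t \<in> N. v \<in> \<beta> t})"

definition is_leaf_node :: "('n \<times> 'n) set \<Rightarrow> ('n \<Rightarrow> 'v set) \<Rightarrow> 'n \<Rightarrow> bool" where
  "is_leaf_node C \<beta> t \<longleftrightarrow> children C t = {} \<and> \<beta> t = {}"

definition is_introduce_node :: "('n \<times> 'n) set \<Rightarrow> ('n \<Rightarrow> 'v set) \<Rightarrow> 'n \<Rightarrow> 'v \<Rightarrow> bool" where
  "is_introduce_node C \<beta> t w \<longleftrightarrow> (\<exists>c. children C t = {c} \<and> w \<notin> \<beta> c \<and> \<beta> t = insert w (\<beta> c))"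

definition is_forget_node :: "('n \<times> 'n) set \<Rightarrow> ('n \<Rightarrow> 'v set) \<Rightarrow> 'n \<Rightarrow> 'v \<Rightarrow> bool" where
  "is_forget_node C \<beta> t w \<longleftrightarrow> (\<exists>c. children C t = {c} \<and> w \<in> \<beta> c \<and> \<beta> t = \<beta> c - {w})"

definition is_join_node :: "('n \<times> 'n) set \<Rightarrow> ('n \<Rightarrow> 'v set) \<Rightarrow> 'n \<Rightarrow> 'n \<Rightarrow> 'n \<Rightarrow> bool" where
  "is_join_node C \<beta> t t1 t2 \<longleftrightarrow> t1 \<noteq> t2 \<and> children C t = {t1, t2} \<and> \<beta> t1 = \<beta> t \<and> \<beta> t2 = \<beta> t"

definition nice_tree_decomposition :: "'v set \<Rightarrow> ('v \<Rightarrow> 'v \<Rightarrow> bool) \<Rightarrow> 'n set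
    \<Rightarrow> ('n \<times> 'n) set \<Rightarrow> 'n \<Rightarrow> ('n \<Rightarrow> 'v set) \<Rightarrow> bool" where
  "nice_tree_decomposition V E N C r \<beta> \<longleftrightarrow> tree_decomposition V E N C r \<beta> \<and> \<beta> r = {} \<and>
     (\<forall>t \<in> N. is_leaf_node C \<beta> t \<or> (\<exists>w. is_introduce_node C \<beta> t w)
        \<or> (\<exists>w. is_forget_node C \<beta> t w) \<or> (\<exists>t1 t2. is_join_node C \<beta> t t1 t2))"

definition derived_bag :: "'v set \<Rightarrow> 'v set \<Rightarrow> ('v \<Rightarrow> 'v \<Rightarrow> bool) \<Rightarrow> ('n \<times> 'n) set
    \<Rightarrow> ('n \<Rightarrow> 'v set) \<Rightarrow> 'n \<Rightarrow> 'v set" where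
  "derived_bag W U E C \<beta> t = (\<beta> t \<inter> W) \<union> (\<Union>s \<in> \<beta> t \<inter> U. nbr E s \<inter> gamma C \<beta> t)"

definition Original :: "'v set \<Rightarrow> 'v set \<Rightarrow> ('v \<Rightarrow> 'v \<Rightarrow> bool) \<Rightarrow> ('n \<times> 'n) set
    \<Rightarrow> ('n \<Rightarrow> 'v set) \<Rightarrow> 'n \<Rightarrow> 'v set" where
  "Original W U E C \<beta> t = \<beta> t \<inter> derived_bag W U E C \<beta> t"

definition Fake :: "'v set \<Rightarrow> 'v set \<Rightarrow> ('v \<Rightarrow> 'v \<Rightarrow> bool) \<Rightarrow> ('n \<times> 'n) set
    \<Rightarrow> ('n \<Rightarrow> 'v set) \<Rightarrow> 'n \<Rightarrow> 'v set" where
  "Fake W U E C \<beta> t = derived_bag W U E C \<beta> t - \<beta> t"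

definition Cliques :: "'v set \<Rightarrow> ('v \<Rightarrow> 'v \<Rightarrow> bool) \<Rightarrow> ('n \<Rightarrow> 'v set) \<Rightarrow> 'n \<Rightarrow> 'v set set" where
  "Cliques U E \<beta> t = {nbr E s | s. s \<in> U \<and> s \<in> \<beta> t}"

end

theory Submission
  imports Defs
begin

lemma rt_parent_unique:
  assumes "rooted_tree N C r" "(x, y) \<in> C" "(z, y) \<in> C"
  shows "x = z"
proof -
  have "y \<in> N" "y \<noteq> r" using assms unfolding rooted_tree_def by auto
  then show ?thesis using assms unfolding rooted_tree_def by blast
qed

lemma rt_acyclic:
  assumes "rooted_tree N C r"
  shows "(y, y) \<notin> C\<^sup>+"
proof
  assume yy: "(y, y) \<in> C\<^sup>+"
  then obtain w where "(w, y) \<in> C" by (meson tranclE)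
  hence "y \<in> N" using assms unfolding rooted_tree_def by auto
  hence "(r, y) \<in> C\<^sup>*" using assms unfolding rooted_tree_def by auto
  then show False using yy
  proof (induction rule: rtrancl_induct)
    case base
    then obtain w where "(w, r) \<in> C" by (meson tranclE)
    then show ?case using assms unfolding rooted_tree_def by auto
  next
    case (step y z)
    from step.prems obtain w where w: "(z, w) \<in> C\<^sup>*" "(w, z) \<in> C"
      by (meson tranclD2)
    have "w = y" using rt_parent_unique[OF assms w(2) step.hyps(2)] .
    hence "(y, y) \<in> C\<^sup>+" using w step.hyps(2)
      by (meson rtrancl_into_trancl2)
    then show ?case using step.IH by blast
  qed
qed

lemma rt_comparable:
  assumes "rooted_tree N C r" "(a, d) \<in> C\<^sup>*" "(b, d) \<in> C\<^sup>*"
  shows "(a, b) \<in> C\<^sup>* \<or> (b, a) \<in> C\<^sup>*"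
  using assms(2,3)
proof (induction rule: rtrancl_induct)
  case base
  then show ?case by blast
next
  case (step y z)
  show ?case
  proof (cases "b = z")
    case True
    then show ?thesis using step by (meson rtrancl.rtrancl_into_rtrancl)
  next
    case False
    then obtain w where w: "(b, w) \<in> C\<^sup>*" "(w, z) \<in> C" using step.prems
      by (metis rtranclE)
    have "w = y" using rt_parent_unique[OF assms(1) w(2) step.hyps(2)] .
    then show ?thesis using step.IH w by blast
  qed
qed

lemma rt_desc_step:
  assumes "rooted_tree N C r" "(t1, y) \<in> C\<^sup>*" "(z, y) \<in> C" "(t, t1) \<in> C"
  shows "(t1, z) \<in> C\<^sup>* \<or> z = t"
proof (cases "y = t1")
  case True
  then show ?thesis using rt_parent_unique[OF assms(1) assms(3)] assms(4) by blast
next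
  case False
  then obtain w where w: "(t1, w) \<in> C\<^sup>*" "(w, y) \<in> C" using assms(2)
    by (metis rtranclE)
  then show ?thesis using rt_parent_unique[OF assms(1) w(2) assms(3)] by blast
qed

lemma rt_desc_N:
  assumes "rooted_tree N C r" "(a, d) \<in> C\<^sup>*" "a \<in> N"
  shows "d \<in> N"
  using assms(2,3)
  by (induction rule: rtrancl_induct) (use assms(1) in \<open>auto simp: rooted_tree_def\<close>)

theorem lemma13:
  fixes VG W U :: "'v set" and EG E :: "'v \<Rightarrow> 'v \<Rightarrow> bool"
    and N :: "'n set" and C :: "('n \<times> 'n) set" and r t t1 t2 :: 'n and \<beta> :: "'n \<Rightarrow> 'v set"
  assumes "map_graph_with VG EG W U E"
    and "nice_tree_decomposition (W \<union> U) E N C r \<beta>"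
    and "t \<in> N"
    and "is_join_node C \<beta> t t1 t2"
  shows "Original W U E C \<beta> t = Original W U E C \<beta> t1
       \<and> Original W U E C \<beta> t1 = Original W U E C \<beta> t2
       \<and> Cliques U E \<beta> t = Cliques U E \<beta> t1
       \<and> Cliques U E \<beta> t1 = Cliques U E \<beta> t2
       \<and> Fake W U E C \<beta> t1 \<inter> Fake W U E C \<beta> t2 = {}
       \<and> Fake W U E C \<beta> t = Fake W U E C \<beta> t1 \<union> Fake W U E C \<beta> t2"
proof -
  have td: "tree_decomposition (W \<union> U) E N C r \<beta>"
    using assms(2) unfolding nice_tree_decomposition_def by blast
  have rt: "rooted_tree N C r" using td unfolding tree_decomposition_def by blast
  have j: "t1 \<noteq> t2" "children C t = {t1, t2}" "\<beta> t1 = \<beta> t" "\<beta> t2 = \<beta> t"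
    using assms(4) unfolding is_join_node_def by auto
  have c1: "(t, t1) \<in> C" and c2: "(t, t2) \<in> C" using j(2) unfolding children_def by auto
  have t1N: "t1 \<in> N" and t2N: "t2 \<in> N" using rt c1 c2 unfolding rooted_tree_def by auto
  have desc: "descendants C t = {t} \<union> descendants C t1 \<union> descendants C t2"
  proof (intro equalityI subsetI)
    fix d assume "d \<in> descendants C t"
    hence "(t, d) \<in> C\<^sup>*" unfolding descendants_def by simp
    then show "d \<in> {t} \<union> descendants C t1 \<union> descendants C t2"
    proof (cases rule: converse_rtranclE)
      case (step c)
      hence "c \<in> {t1, t2}" using j(2) unfolding children_def by blast
      then show ?thesis using step unfolding descendants_def by auto
    qed simp
  next
    fix d assume "d \<in> {t} \<union> descendants C t1 \<union> descendants C t2"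
    then show "d \<in> descendants C t" using c1 c2 unfolding descendants_def
      by (auto intro: converse_rtrancl_into_rtrancl)
  qed
  have gam: "gamma C \<beta> t = \<beta> t \<union> gamma C \<beta> t1 \<union> gamma C \<beta> t2"
    unfolding gamma_def desc by auto
  have b1: "\<beta> t \<subseteq> gamma C \<beta> t1" using j(3) unfolding gamma_def descendants_def by auto
  have b2: "\<beta> t \<subseteq> gamma C \<beta> t2" using j(4) unfolding gamma_def descendants_def by auto
  have bt: "\<beta> t \<subseteq> gamma C \<beta> t" using gam by auto
  have orig: "Original W U E C \<beta> x = \<beta> t \<inter> ((\<beta> t \<inter> W) \<union> (\<Union>s \<in> \<beta> t \<inter> U. nbr E s))"
    if "x \<in> {t, t1, t2}" for x
  proof -
    have "\<beta> x = \<beta> t" "\<beta> t \<subseteq> gamma C \<beta> x" using that j b1 b2 bt by auto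
    then show ?thesis unfolding Original_def derived_bag_def by auto
  qed
  have fake: "Fake W U E C \<beta> x = (\<Union>s \<in> \<beta> t \<inter> U. nbr E s \<inter> gamma C \<beta> x) - \<beta> t"
    if "x \<in> {t, t1, t2}" for x
  proof -
    have "\<beta> x = \<beta> t" using that j by auto
    then show ?thesis unfolding Fake_def derived_bag_def by auto
  qed
  have disj: False if v1: "v \<in> gamma C \<beta> t1" and v2: "v \<in> gamma C \<beta> t2" and vt: "v \<notin> \<beta> t" for v
  proof -
    obtain d1 where d1: "(t1, d1) \<in> C\<^sup>*" "v \<in> \<beta> d1"
      using v1 unfolding gamma_def descendants_def by auto
    obtain d2 where d2: "(t2, d2) \<in> C\<^sup>*" "v \<in> \<beta> d2"
      using v2 unfolding gamma_def descendants_def by auto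
    have d1N: "d1 \<in> N" using rt_desc_N[OF rt d1(1) t1N] .
    have d2N: "d2 \<in> N" using rt_desc_N[OF rt d2(1) t2N] .
    have "v \<in> W \<union> U" using td d1N d1(2) unfolding tree_decomposition_def by blast
    hence tc: "tree_connected C {x \<in> N. v \<in> \<beta> x}"
      using td unfolding tree_decomposition_def by blast
    define X where "X = {x \<in> N. v \<in> \<beta> x}"
    have "(d1, d2) \<in> {(a, b). a \<in> X \<and> b \<in> X \<and> ((a, b) \<in> C \<or> (b, a) \<in> C)}\<^sup>*"
      using tc d1N d2N d1 d2 unfolding tree_connected_def X_def by blast
    hence "(t1, d2) \<in> C\<^sup>*"
    proof (induction rule: rtrancl_induct)
      case base
      then show ?case using d1 by simp
    next
      case (step y z)
      hence zX: "z \<in> X" and yz: "(y, z) \<in> C \<or> (z, y) \<in> C" by auto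
      have "t \<notin> X" using vt unfolding X_def by auto
      hence "z \<noteq> t" using zX by auto
      then show ?case using yz step.IH rt_desc_step[OF rt step.IH _ c1]
        by (meson rtrancl.rtrancl_into_rtrancl)
    qed
    hence "(t1, t2) \<in> C\<^sup>* \<or> (t2, t1) \<in> C\<^sup>*" using rt_comparable[OF rt _ d2(1)] by blast
    then show False
    proof
      assume "(t1, t2) \<in> C\<^sup>*"
      hence "(t1, t) \<in> C\<^sup>* \<or> t = t" using rt_desc_step[OF rt _ c2 c1] by blast
      have "(t1, t) \<in> C\<^sup>*"
        using rt_desc_step[OF rt \<open>(t1, t2) \<in> C\<^sup>*\<close> c2 c1] j(1) \<open>(t1, t2) \<in> C\<^sup>*\<close>
        by (metis rt_parent_unique[OF rt] c1 c2 rtranclE)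
      hence "(t, t) \<in> C\<^sup>+" using c1 by (meson rtrancl_into_trancl2)
      then show False using rt_acyclic[OF rt] by blast
    next
      assume "(t2, t1) \<in> C\<^sup>*"
      have "(t2, t) \<in> C\<^sup>*"
        using \<open>(t2, t1) \<in> C\<^sup>*\<close> j(1)
        by (metis rt_parent_unique[OF rt] c1 c2 rtranclE)
      hence "(t, t) \<in> C\<^sup>+" using c2 by (meson rtrancl_into_trancl2)
      then show False using rt_acyclic[OF rt] by blast
    qed
  qed
  have cl: "Cliques U E \<beta> t1 = Cliques U E \<beta> t" "Cliques U E \<beta> t2 = Cliques U E \<beta> t"
    unfolding Cliques_def j by auto
  show ?thesis
    unfolding cl
    apply (simp only: orig[of t] orig[of t1] orig[of t2] fake[of t] fake[of t1] fake[of t2]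
        insert_iff simp_thms)
    using disj gam by blast
qed

end
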